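(* Let $(0,0,y_e,0)$ be an equilibrium of the Steiner drop system, with $y_e=\tfrac13\sqrt{\tan\alpha_e}$, $\alpha_e\in(0,\pi/2)$, $q(\alpha_e)=q(\alpha_0)$. Then $f_x(0,y_e)<0$, so two eigenvalues of the Jacobian there are $\pm i\sqrt{-f_x(0,y_e)}$, nonzero and purely imaginary. Furthermore $h_y(0,y_e)<0$ if $\alpha_e<\alpha_0^*$, $h_y(0,y_e)=0$ if $\alpha_e=\alpha_0^*$, and $h_y(0,y_e)>0$ if $\alpha_e>\alpha_0^*$. Consequently, at the equilibrium $(0,0,\tfrac13\sqrt{\tan\alpha_0},0)$ all four eigenvalues are nonzero and purely imaginary when $\alpha_0<\alpha_0^*$, while when $\alpha_0>\alpha_0^*$ two eigenvalues are purely imaginary and two are real, nonzero, of opposite signs; for $\alpha_0\neq\alpha_0^*$ the two equilibria always have opposite types (the one with smaller angle $\alpha_e$ has all eigenvalues purely imaginary).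
   Context: Let $q(\alpha)=\dfrac{2\sin^2\alpha\,\sqrt{\tan\alpha}}{4+\sec\alpha}$ for $\alpha\in(0,\pi/2)$, and let $\alpha_0^*\approx1.391$ denote the unique point in $(0,\pi/2)$ at which $q$ attains its maximum ($q$ is strictly increasing before and strictly decreasing after $\alpha_0^*$). Fix $\alpha_0\in(0,\pi/2)$. For $x\in\mathbb{R}$, $y>0$ define $a(x,y)=\sqrt{\left(\tfrac{1}{3y}-3x\right)^2+9y^2}$, $b(x,y)=\sqrt{\left(\tfrac{1}{3y}+3x\right)^2+9y^2}$, $f(x,y)=\frac{1}{a}\left(\frac{1}{3y}-3x\right)-\frac{1}{b}\left(\frac{1}{3y}+3x\right)$, $h(x,y)=-3y\left(\frac1a+\frac1b\right)+\frac{q(\alpha_0)}{3y}\left(\frac{2(a+b)}{3y}+ab\right)$. The Steiner drop system is the ODE on $\{(x,w,y,z)\in\mathbb{R}^4: y>0\}$: $\dot x=w,\ \dot w=f(x,y),\ \dot y=z,\ \dot z=h(x,y)$. Its equilibria are the points $(0,0,y,0)$ with $y=\tfrac13\sqrt{\tan\alpha}$, $q(\alpha)=q(\alpha_0)$; at such a point the Jacobian eigenvalues are $\pm\sqrt{f_x(0,y)},\pm\sqrt{h_y(0,y)}$. Subscripts denote partial derivatives. *)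

theory Defs
  imports Complex_Main "HOL-Analysis.Derivative" "Jordan_Normal_Form.Char_Poly"
begin

definition q :: "real \<Rightarrow> real" where
  "q \<alpha> = 2 * (sin \<alpha>)\<^sup>2 * sqrt (tan \<alpha>) / (4 + 1 / cos \<alpha>)"

definition alpha_star :: real where
  "alpha_star = (THE a. 0 < a \<and> a < pi/2 \<and> (\<forall>b. 0 < b \<and> b < pi/2 \<longrightarrow> q b \<le> q a))"

definition sa :: "real \<Rightarrow> real \<Rightarrow> real" where
  "sa x y = sqrt ((1/(3*y) - 3*x)\<^sup>2 + 9*y\<^sup>2)"

definition sb :: "real \<Rightarrow> real \<Rightarrow> real" where
  "sb x y = sqrt ((1/(3*y) + 3*x)\<^sup>2 + 9*y\<^sup>2)"

definition sf :: "real \<Rightarrow> real \<Rightarrow> real" where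
  "sf x y = (1 / sa x y) * (1/(3*y) - 3*x) - (1 / sb x y) * (1/(3*y) + 3*x)"

definition sh :: "real \<Rightarrow> real \<Rightarrow> real \<Rightarrow> real" where
  "sh \<alpha>0 x y = -3*y * (1 / sa x y + 1 / sb x y)
     + q \<alpha>0 / (3*y) * (2 * (sa x y + sb x y) / (3*y) + sa x y * sb x y)"

definition f_x :: "real \<Rightarrow> real \<Rightarrow> real" where "f_x x y = deriv (\<lambda>t. sf t y) x"
definition f_y :: "real \<Rightarrow> real \<Rightarrow> real" where "f_y x y = deriv (\<lambda>t. sf x t) y"
definition h_x :: "real \<Rightarrow> real \<Rightarrow> real \<Rightarrow> real" where "h_x \<alpha>0 x y = deriv (\<lambda>t. sh \<alpha>0 t y) x"
definition h_y :: "real \<Rightarrow> real \<Rightarrow> real \<Rightarrow> real" where "h_y \<alpha>0 x y = deriv (\<lambda>t. sh \<alpha>0 x t) y"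

text \<open>Jacobian (complexified) of the Steiner drop system
  (x' = w, w' = f(x,y), y' = z, z' = h(x,y)) at the point (x,w,y,z),
  variables ordered (x, w, y, z).\<close>
definition steiner_jac :: "real \<Rightarrow> real \<Rightarrow> real \<Rightarrow> complex mat" where
  "steiner_jac \<alpha>0 x y = mat 4 4 (\<lambda>(i,j).
     complex_of_real
      (if i = 0 then (if j = 1 then 1 else 0)
       else if i = 1 then (if j = 0 then f_x x y else if j = 2 then f_y x y else 0)
       else if i = 2 then (if j = 3 then 1 else 0)
       else (if j = 0 then h_x \<alpha>0 x y else if j = 2 then h_y \<alpha>0 x y else 0)))"

end

theory Submission
  imports Defs
begin

lemma alg1: fixes s c r :: real assumes "s>0" "c>0" "r>0" "s^2 = 1 - c^2"
 shows "(((0 * s\<^sup>2 + real 2 * (c * 1 * s ^ (2 - Suc 0)) * 2) * r +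
      r * c / s / 2 * (inverse (c\<^sup>2) * 1) * (2 * s\<^sup>2)) *
     (4 + 1 / c) -
     2 * s\<^sup>2 * r *
     (0 + (0 * c - 1 * (- s * 1)) / (c * c))) /
    ((4 + 1 / c) * (4 + 1 / c)) =
    s\<^sup>2 * (16 * c ^ 3 + 6 * c\<^sup>2 + 4 * c - 1) *
    (r * c / s) /
    (c ^ 3 * (4 + 1 / c)\<^sup>2)"
proof -
  define K where "K = 4 + 1/c"
  have Kp: "K > 0" unfolding K_def using assms by (intro add_pos_pos) auto
  have X: "((0 * s\<^sup>2 + real 2 * (c * 1 * s ^ (2 - Suc 0)) * 2) * r +
      r * c / s / 2 * (inverse (c\<^sup>2) * 1) * (2 * s\<^sup>2)) = r * s * (4*c^2+1)/c"
    using assms by (simp add: field_simps power2_eq_square)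
  have Y: "2 * s\<^sup>2 * r * (0 + (0 * c - 1 * (- s * 1)) / (c * c)) = 2*r * s * s^2/c^2"
    using assms by (simp add: field_simps power2_eq_square)
  have Z: "s\<^sup>2 * (16 * c ^ 3 + 6 * c\<^sup>2 + 4 * c - 1) * (r * c / s) = r * s * c*(16 * c ^ 3 + 6 * c\<^sup>2 + 4 * c - 1)"
    using assms by (simp add: field_simps power2_eq_square)
  have W: "(r * s * (4*c^2+1)/c) * K - 2*r * s * s^2/c^2 = r * s * (16 * c ^ 3 + 6 * c\<^sup>2 + 4 * c - 1)/c^2"
    unfolding K_def assms(4) using assms by (simp add: field_simps power2_eq_square power3_eq_cube)
  show ?thesis unfolding K_def[symmetric] X Y Z W using assms Kp
    by (simp add: field_simps power2_eq_square power3_eq_cube)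
qed

definition Pc :: "real \<Rightarrow> real" where "Pc c = 16*c^3 + 6*c^2 + 4*c - 1"
definition qd :: "real \<Rightarrow> real" where
 "qd a = (sin a)^2 * Pc (cos a) / (cos a ^3 * sqrt(tan a) * (4 + 1/cos a)^2)"

lemma trig_pos: assumes "0<a" "a<pi/2" shows "cos a > 0" "sin a > 0" "tan a > 0"
  using assms by (auto intro: cos_gt_zero sin_gt_zero tan_gt_zero)

lemma q_deriv: "(q has_real_derivative qd a) (at a)" if "0<a" "a<pi/2"
proof -
  note c = trig_pos[OF that]
  have k: "4 + 1/cos a > 0" using c by (intro add_pos_pos) auto
  have s2: "(sin a)^2 = 1 - (cos a)^2" by (simp add: sin_squared_eq)
  define r where "r = sqrt (tan a)"
  have r: "r > 0" "r^2 = sin a / cos a" using c by (auto simp: r_def tan_def)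
  have ir: "inverse r = r * cos a / sin a" using r c by (simp add: field_simps power2_eq_square)
  have e: "qd a = (sin a)^2 * Pc (cos a) * (r * cos a / sin a) / (cos a ^3 * (4 + 1/cos a)^2)"
    unfolding qd_def r_def[symmetric] using ir by (simp add: divide_inverse)
  show ?thesis
  unfolding q_def
  apply (rule derivative_eq_intros refl | use c in simp)+
  using k apply simp
  unfolding r_def[symmetric] ir e Pc_def
  using alg1[OF c(2) c(1) r(1) s2] .
qed

lemma sgn_lem: fixes X Y P :: real assumes "X > 0" "Y > 0"
  shows "X * P / Y > 0 \<longleftrightarrow> P > 0" "X * P / Y < 0 \<longleftrightarrow> P < 0" "X * P / Y = 0 \<longleftrightarrow> P = 0"
proof -
  define k where "k = X / Y"
  have e: "X * P / Y = k * P" by (simp add: k_def)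
  have k: "k > 0" using assms by (simp add: k_def)
  show "X * P / Y > 0 \<longleftrightarrow> P > 0" unfolding e using k by (simp add: zero_less_mult_iff)
  show "X * P / Y < 0 \<longleftrightarrow> P < 0" unfolding e using k by (simp add: mult_less_0_iff)
  show "X * P / Y = 0 \<longleftrightarrow> P = 0" unfolding e using k by simp
qed

lemma qd_sign: assumes "0<a" "a<pi/2"
  shows "qd a > 0 \<longleftrightarrow> Pc (cos a) > 0" "qd a < 0 \<longleftrightarrow> Pc (cos a) < 0" "qd a = 0 \<longleftrightarrow> Pc (cos a) = 0"
proof -
  note c = trig_pos[OF assms]
  have k: "4 + 1/cos a > 0" using c by (intro add_pos_pos) auto
  have d: "cos a ^3 * sqrt(tan a) * (4 + 1/cos a)^2 > 0" using c k by (intro mult_pos_pos) auto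
  have s: "(sin a)^2 > 0" using c by simp
  show "qd a > 0 \<longleftrightarrow> Pc (cos a) > 0" "qd a < 0 \<longleftrightarrow> Pc (cos a) < 0" "qd a = 0 \<longleftrightarrow> Pc (cos a) = 0"
    unfolding qd_def using sgn_lem[OF s d] by auto
qed

lemma Pc_mono: assumes "0 \<le> c1" "c1 < c2" shows "Pc c1 < Pc c2"
proof -
  have "Pc c2 - Pc c1 = (c2-c1)*(16*(c2^2+c1*c2+c1^2)+6*(c1+c2)+4)"
    by (simp add: Pc_def algebra_simps power2_eq_square power3_eq_cube)
  moreover have "(c2-c1)*(16*(c2^2+c1*c2+c1^2)+6*(c1+c2)+4) > 0"
  proof (rule mult_pos_pos)
    define m where "m = c2^2+c1*c2+c1^2"
    have "m \<ge> 0" using assms by (simp add: m_def)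
    then have "16*m+6*(c1+c2)+4 > 0" using assms by (smt (z3))
    then show "16*(c2^2+c1*c2+c1^2)+6*(c1+c2)+4 > 0" by (simp add: m_def)
  qed (use assms in simp)
  ultimately show ?thesis by simp
qed

lemma Pc_root_ex: "\<exists>c. 0 < c \<and> c < 1 \<and> Pc c = 0"
proof -
  have "\<exists>x. 0 \<le> x \<and> x \<le> 1 \<and> Pc x = 0"
    by (rule IVT) (auto simp: Pc_def intro!: continuous_intros)
  then obtain x where x: "0 \<le> x" "x \<le> 1" "Pc x = 0" by blast
  have "x \<noteq> 0" "x \<noteq> 1" using x by (auto simp: Pc_def)
  then show ?thesis using x by (intro exI[of _ x]) auto
qed

definition cs :: real where "cs = (SOME c. 0 < c \<and> c < 1 \<and> Pc c = 0)"
lemma cs: "0 < cs" "cs < 1" "Pc cs = 0"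
  using someI_ex[OF Pc_root_ex] unfolding cs_def[symmetric] by auto

definition astar :: real where "astar = arccos cs"
lemma astar: "0 < astar" "astar < pi/2" "cos astar = cs"
proof -
  show cc: "cos astar = cs" unfolding astar_def using cs by simp
  show "0 < astar" unfolding astar_def using arccos_lt_bounded[of cs] cs by auto
  have "astar < pi" unfolding astar_def using arccos_lt_bounded[of cs] cs by auto
  show "astar < pi/2"
  proof (rule ccontr)
    assume "\<not> astar < pi/2"
    then have "cos astar \<le> cos (pi/2)" using \<open>astar < pi\<close> \<open>0 < astar\<close>
      by (subst cos_mono_le_eq) auto
    then show False using cc cs by simp
  qed
qed

lemma Pc_cos_sign: assumes "0<a" "a<pi/2"
  shows "a < astar \<Longrightarrow> Pc (cos a) > 0" "a > astar \<Longrightarrow> Pc (cos a) < 0" "a = astar \<Longrightarrow> Pc (cos a) = 0"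
proof -
  note c = trig_pos[OF assms]
  show "a < astar \<Longrightarrow> Pc (cos a) > 0"
  proof -
    assume h: "a < astar"
    have "cos astar < cos a" using h assms astar by (intro cos_monotone_0_pi) auto
    then show ?thesis using Pc_mono[of cs "cos a"] cs astar by auto
  qed
  show "a > astar \<Longrightarrow> Pc (cos a) < 0"
  proof -
    assume h: "a > astar"
    have "cos a < cos astar" using h assms astar by (intro cos_monotone_0_pi) auto
    then show ?thesis using Pc_mono[of "cos a" cs] cs astar c by auto
  qed
  show "a = astar \<Longrightarrow> Pc (cos a) = 0" using astar cs by simp
qed

lemma q_inc: assumes "0 < x" "x < y" "y \<le> astar" shows "q x < q y"
proof (rule DERIV_pos_imp_increasing_open[OF assms(2)])
  fix z assume z: "x < z" "z < y"
  have z1: "0<z" "z<pi/2" "z < astar" using assms astar(1,2) z by linarith+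
  show "\<exists>d. (q has_real_derivative d) (at z) \<and> 0 < d"
  proof -
    have "Pc (cos z) > 0" by (rule Pc_cos_sign(1)[OF z1(1,2) z1(3)])
    then have "qd z > 0" using qd_sign(1)[OF z1(1,2)] by simp
    then show ?thesis using q_deriv[OF z1(1,2)] by blast
  qed
next
  show "continuous_on {x..y} q"
  proof (intro continuous_at_imp_continuous_on ballI)
    fix w assume "w \<in> {x..y}"
    then have "0 < w" "w < pi/2" using assms astar(1,2) by auto
    then show "isCont q w" by (rule DERIV_isCont[OF q_deriv])
  qed
qed

lemma q_dec: assumes "astar \<le> x" "x < y" "y < pi/2" shows "q x > q y"
proof (rule DERIV_neg_imp_decreasing_open[OF assms(2)])
  fix z assume z: "x < z" "z < y"
  have z1: "0<z" "z<pi/2" "z > astar" using assms astar(1,2) z by linarith+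
  show "\<exists>d. (q has_real_derivative d) (at z) \<and> d < 0"
  proof -
    have "Pc (cos z) < 0" by (rule Pc_cos_sign(2)[OF z1(1,2) z1(3)])
    then have "qd z < 0" using qd_sign(2)[OF z1(1,2)] by simp
    then show ?thesis using q_deriv[OF z1(1,2)] by blast
  qed
next
  show "continuous_on {x..y} q"
  proof (intro continuous_at_imp_continuous_on ballI)
    fix w assume "w \<in> {x..y}"
    then have "0 < w" "w < pi/2" using assms astar(1,2) by auto
    then show "isCont q w" by (rule DERIV_isCont[OF q_deriv])
  qed
qed

lemma q_lt_max: assumes "0 < b" "b < pi/2" "b \<noteq> astar" shows "q b < q astar"
proof (cases "b < astar")
  case True then show ?thesis using q_inc[of b astar] assms by auto
next
  case False then show ?thesis using q_dec[of astar b] assms by auto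
qed

lemma alpha_star_eq: "alpha_star = astar"
  unfolding alpha_star_def
proof (rule the_equality)
  show "0 < astar \<and> astar < pi / 2 \<and> (\<forall>b. 0 < b \<and> b < pi / 2 \<longrightarrow> q b \<le> q astar)"
  proof (intro conjI allI impI)
    fix b assume "0 < b \<and> b < pi / 2"
    then show "q b \<le> q astar" using q_lt_max[of b] by (cases "b = astar") auto
  qed (use astar in auto)
next
  fix a assume a: "0 < a \<and> a < pi / 2 \<and> (\<forall>b. 0 < b \<and> b < pi / 2 \<longrightarrow> q b \<le> q a)"
  show "a = astar"
  proof (rule ccontr)
    assume "a \<noteq> astar"
    then have "q a < q astar" using q_lt_max[of a] a by blast
    moreover have "q astar \<le> q a" using a astar(1,2) by blast
    ultimately show False by simp
  qed
qed

lemma q_sep: assumes "0 < a1" "a1 < a2" "a2 < pi/2" "q a1 = q a2" shows "a1 < astar" "astar < a2"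
proof -
  show "a1 < astar"
  proof (rule ccontr)
    assume "\<not> a1 < astar" then have "q a1 > q a2" by (intro q_dec) (use assms in auto)
    then show False using assms by simp
  qed
  show "astar < a2"
  proof (rule ccontr)
    assume "\<not> astar < a2" then have "q a1 < q a2" by (intro q_inc) (use assms in auto)
    then show False using assms by simp
  qed
qed

lemma d_sqrt: assumes "g x > 0" "(g has_real_derivative g') (at x)"
  shows "((\<lambda>t. sqrt (g t)) has_real_derivative g' / (2 * sqrt (g x))) (at x)"
proof -
  have "((\<lambda>t. sqrt (g t)) has_real_derivative inverse (sqrt (g x)) / 2 * g') (at x)"
    by (rule DERIV_chain2[OF DERIV_real_sqrt[OF assms(1)] assms(2)])
  then show ?thesis by (simp add: field_simps)
qed

lemma d_frac: assumes c: "c > 0" and u: "(u has_real_derivative u') (at x)"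
  shows "((\<lambda>t. u t / sqrt ((u t)^2 + c)) has_real_derivative u' * c / sqrt ((u x)^2 + c)^3) (at x)"
proof -
  have p: "(u x)^2 + c > 0" using c by (intro add_nonneg_pos) auto
  define w where "w = sqrt ((u x)^2 + c)"
  have w: "w > 0" "w^2 = (u x)^2 + c" using p by (auto simp: w_def)
  have g: "((\<lambda>t. (u t)^2 + c) has_real_derivative 2 * u x * u') (at x)"
    using u by (auto intro!: derivative_eq_intros)
  have s: "((\<lambda>t. sqrt ((u t)^2 + c)) has_real_derivative 2 * u x * u' / (2 * w)) (at x)"
    unfolding w_def by (rule d_sqrt[OF p g])
  have "((\<lambda>t. u t / sqrt ((u t)^2 + c)) has_real_derivative
      (u' * w - u x * (2 * u x * u' / (2 * w))) / (w * w)) (at x)"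
    using DERIV_divide[OF u s] w unfolding w_def by simp
  moreover have "(u' * w - u x * (2 * u x * u' / (2 * w))) / (w * w) = u' * c / w^3"
  proof -
    have "(u' * w - u x * (2 * u x * u' / (2 * w))) / (w * w) = u' * (w^2 - (u x)^2) / w^3"
      using w by (simp add: field_simps power2_eq_square power3_eq_cube)
    also have "\<dots> = u' * c / w^3" using w by simp
    finally show ?thesis .
  qed
  ultimately show ?thesis unfolding w_def by simp
qed

definition SS :: "real \<Rightarrow> real" where "SS t = sqrt (1 + 81 * t^4)"

lemma SS_pos: "SS t > 0" "SS t ^ 2 = 1 + 81 * t^4"
proof -
  have "1 + 81 * t^4 > 0" by (intro add_pos_nonneg) auto
  then show "SS t > 0" "SS t ^ 2 = 1 + 81 * t^4" by (auto simp: SS_def)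
qed

lemma SS_deriv: "D = 162 * x^3 / SS x \<Longrightarrow> (SS has_real_derivative D) (at x)"
proof -
  assume D: "D = 162 * x^3 / SS x"
  have p: "1 + 81 * x^4 > 0" by (intro add_pos_nonneg) auto
  have g: "((\<lambda>t. 1 + 81 * t^4) has_real_derivative 324 * x^3) (at x)"
    by (auto intro!: derivative_eq_intros)
  have "((\<lambda>t. sqrt (1 + 81 * t^4)) has_real_derivative 324 * x^3 / (2 * sqrt (1 + 81 * x^4))) (at x)"
    by (rule d_sqrt[OF p g])
  then show ?thesis unfolding D SS_def[abs_def] by simp
qed

lemma sa0: assumes "t > 0" shows "sa 0 t = SS t / (3*t)" "sb 0 t = SS t / (3*t)"
proof -
  have e: "(1/(3*t))^2 + 9*t^2 = (1 + 81 * t^4) / (3*t)^2" using assms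
    by (simp add: field_simps power2_eq_square eval_nat_numeral)
  have sq: "sqrt ((3*t)^2) = 3*t" by (subst real_sqrt_abs) (use assms in simp)
  have "sqrt ((1/(3*t))^2 + 9*t^2) = SS t / (3*t)"
    unfolding e real_sqrt_divide SS_def sq by simp
  then show "sa 0 t = SS t / (3*t)" "sb 0 t = SS t / (3*t)" by (simp_all add: sa_def sb_def)
qed

lemma sh0: assumes "t > 0"
  shows "sh a0 0 t = - 18 * t^2 / SS t + q a0 * (4 * SS t + 1 + 81 * t^4) / (27 * t^3)"
proof -
  have S: "SS t > 0" "SS t ^ 2 = 1 + 81 * t^4" by (rule SS_pos)+
  show ?thesis unfolding sh_def sa0[OF assms] using assms S
    by (simp add: field_simps power2_eq_square power3_eq_cube)
qed

lemma H_deriv: assumes "t > 0"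
  shows "((\<lambda>x. - 18 * x^2 / SS x + q0 * (4 * SS x + 1 + 81 * x^4) / (27 * x^3)) has_real_derivative
     - 36 * t / SS t + 2916 * t^5 / SS t ^ 3 + q0 * (24 / SS t + 12 - (4 * SS t + 1 + 81 * t^4) / (9 * t^4))) (at t)"
proof -
  have S: "SS t > 0" "SS t ^ 2 = 1 + 81 * t^4" by (rule SS_pos)+
  have d2: "(SS has_real_derivative 162*t^3/SS t) (at t)" by (rule SS_deriv) simp
  have d1: "((\<lambda>x. -18*x^2) has_real_derivative -36*t) (at t)" by (auto intro!: derivative_eq_intros)
  have d81: "((\<lambda>x. 81*x^4) has_real_derivative 324*t^3) (at t)" by (auto intro!: derivative_eq_intros)
  have dc: "((\<lambda>x. 27*x^3) has_real_derivative 81*t^2) (at t)" by (auto intro!: derivative_eq_intros)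
  have d3: "((\<lambda>x. q0 * (4 * SS x + 1 + 81 * x^4)) has_real_derivative q0*(4*(162*t^3/SS t) + 0 + 324*t^3)) (at t)"
    by (intro DERIV_cmult DERIV_add DERIV_const d2 d81)
  have A: "((\<lambda>x. - 18 * x^2 / SS x) has_real_derivative (-36*t * SS t - (-18*t^2) * (162*t^3/SS t)) / (SS t * SS t)) (at t)"
    using DERIV_divide[OF d1 d2] S by simp
  have B: "((\<lambda>x. q0 * (4 * SS x + 1 + 81 * x^4) / (27 * x^3)) has_real_derivative
     (q0*(4*(162*t^3/SS t) + 0 + 324*t^3) * (27*t^3) - q0 * (4 * SS t + 1 + 81 * t^4) * (81*t^2)) / ((27*t^3) * (27*t^3))) (at t)"
    using DERIV_divide[OF d3 dc] assms by simp
  show ?thesis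
  proof (rule DERIV_cong[OF DERIV_add[OF A B]])
    show "(-36*t * SS t - (-18*t^2) * (162*t^3/SS t)) / (SS t * SS t) +
      (q0*(4*(162*t^3/SS t) + 0 + 324*t^3) * (27*t^3) - q0 * (4 * SS t + 1 + 81 * t^4) * (81*t^2)) / ((27*t^3) * (27*t^3))
      = - 36 * t / SS t + 2916 * t^5 / SS t ^ 3 + q0 * (24 / SS t + 12 - (4 * SS t + 1 + 81 * t^4) / (9 * t^4))"
      using assms S(1) by (simp add: field_simps power2_eq_square eval_nat_numeral)
  qed
qed

lemma alg2: fixes S t K D :: real assumes "S>0" "K>0" "D>0" "K = 4+S" "D = S^2 - 1"
  shows "- 36 * t / S + 36 * t * D / S ^ 3 + 6*t*D/(S^2 * K) * (24 / S + 12 - (4 * S + 1 + D) / (D / 9))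
       = - (18 * t / (S^3 * K)) * (16 + 6 * S + 4 * S^2 - S^3)"
proof -
  have e: "4 * S + 1 + D = S * K" using assms(4,5) by (simp add: power2_eq_square algebra_simps)
  show ?thesis unfolding e using assms(1-3)
    apply (simp add: field_simps)
    apply (simp only: assms(4,5))
    apply (simp add: eval_nat_numeral algebra_simps)
    done
qed

lemma hy_formula: assumes t: "t > 0" and q0: "q a0 = 6*t*(SS t^2 - 1)/(SS t^2 * (4 + SS t))"
  shows "h_y a0 0 t = - (18 * t / (SS t^3 * (4 + SS t))) * (16 + 6 * SS t + 4 * SS t^2 - SS t^3)"
proof -
  define S where "S = SS t"
  have S: "S > 0" "S^2 = 1 + 81 * t^4" unfolding S_def by (rule SS_pos)+
  have t4: "t^4 > 0" using t by simp
  have S1: "S^2 - 1 > 0" using S t4 by simp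
  have d: "((\<lambda>x. sh a0 0 x) has_real_derivative
     - 36 * t / SS t + 2916 * t^5 / SS t ^ 3 + q a0 * (24 / SS t + 12 - (4 * SS t + 1 + 81 * t^4) / (9 * t^4))) (at t)"
  proof (rule has_field_derivative_transform_within_open[OF H_deriv[OF t] _ _ ])
    show "open {0::real<..}" by simp
    show "t \<in> {0<..}" using t by simp
    fix x :: real assume "x \<in> {0<..}"
    then show "- 18 * x^2 / SS x + q a0 * (4 * SS x + 1 + 81 * x^4) / (27 * x^3) = sh a0 0 x"
      using sh0[of x a0] by simp
  qed
  have hy: "h_y a0 0 t = - 36 * t / S + 2916 * t^5 / S ^ 3 + q a0 * (24 / S + 12 - (4 * S + 1 + 81 * t^4) / (9 * t^4))"
    unfolding h_y_def S_def by (rule DERIV_imp_deriv[OF d])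
  have e1: "81 * t^4 = S^2 - 1" using S by simp
  have e2: "9 * t^4 = (S^2 - 1) / 9" using S by simp
  have e3: "2916 * t^5 = 36 * t * (S^2 - 1)" using S by (simp add: eval_nat_numeral field_simps)
  have q0': "q a0 = 6*t*(S^2 - 1)/(S^2 * (4 + S))" using q0 unfolding S_def .
  have "h_y a0 0 t = - 36 * t / S + 36 * t * (S^2 - 1) / S ^ 3 + 6*t*(S^2 - 1)/(S^2 * (4 + S)) * (24 / S + 12 - (4 * S + 1 + (S^2 - 1)) / ((S^2 - 1) / 9))"
    unfolding hy e1 e2 e3 q0' by simp
  also have "\<dots> = - (18 * t / (S^3 * (4 + S))) * (16 + 6 * S + 4 * S^2 - S^3)"
    by (rule alg2) (use S(1) S1 in auto)
  finally show ?thesis unfolding S_def .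
qed


definition JM :: "real \<Rightarrow> real \<Rightarrow> complex mat" where
  "JM F H = mat 4 4 (\<lambda>(i,j).
     complex_of_real
      (if i = 0 then (if j = 1 then 1 else 0)
       else if i = 1 then (if j = 0 then F else if j = 2 then 0 else 0)
       else if i = 2 then (if j = 3 then 1 else 0)
       else (if j = 0 then 0 else if j = 2 then H else 0)))"

lemma sum4: "(\<Sum>j\<in>{0..<4::nat}. f j) = f 0 + f 1 + f 2 + f 3"
  by (simp add: eval_nat_numeral atLeast0_lessThan_Suc ac_simps)

lemma JM_mult: assumes "dim_vec v = 4"
  shows "(JM F H *\<^sub>v v) $ 0 = v $ 1" "(JM F H *\<^sub>v v) $ 1 = of_real F * v $ 0"
        "(JM F H *\<^sub>v v) $ 2 = v $ 3" "(JM F H *\<^sub>v v) $ 3 = of_real H * v $ 2"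
  using assms by (simp_all add: JM_def scalar_prod_def sum4)

lemma lt4: "(i::nat) < 4 \<Longrightarrow> i = 0 \<or> i = 1 \<or> i = 2 \<or> i = 3" by auto

lemma JM_eig: "eigenvalue (JM F H) k \<longleftrightarrow> k^2 = of_real F \<or> k^2 = of_real H"
proof
  assume "eigenvalue (JM F H) k"
  then obtain v where v: "v \<in> carrier_vec 4" "v \<noteq> 0\<^sub>v 4" "JM F H *\<^sub>v v = k \<cdot>\<^sub>v v"
    unfolding eigenvalue_def eigenvector_def by (auto simp: JM_def)
  have d: "dim_vec v = 4" using v(1) by simp
  have c: "(JM F H *\<^sub>v v) $ i = k * v $ i" if "i < 4" for i
    using v(3) that d by (metis index_smult_vec(1))
  have e0: "v $ 1 = k * v $ 0" using c[of 0] JM_mult[OF d] by simp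
  have e1: "of_real F * v $ 0 = k * v $ 1" using c[of 1] JM_mult[OF d] by simp
  have e2: "v $ 3 = k * v $ 2" using c[of 2] JM_mult[OF d] by simp
  have e3: "of_real H * v $ 2 = k * v $ 3" using c[of 3] JM_mult[OF d] by simp
  show "k^2 = of_real F \<or> k^2 = of_real H"
  proof (cases "v $ 0 = 0")
    case False
    have "k^2 * v $ 0 = k * (k * v $ 0)" by (simp add: power2_eq_square)
    also have "\<dots> = k * v $ 1" using e0 by simp
    also have "\<dots> = of_real F * v $ 0" using e1 by simp
    finally have "k^2 * v $ 0 = of_real F * v $ 0" .
    then have "k^2 = of_real F" using False mult_cancel_right by blast
    then show ?thesis by blast
  next
    case True
    have "v $ 2 \<noteq> 0"
    proof
      assume "v $ 2 = 0"
      then have "v = 0\<^sub>v 4" using True e0 e2 d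
        by (intro eq_vecI) (auto dest!: lt4)
      then show False using v(2) by simp
    qed
    moreover have "k^2 * v $ 2 = of_real H * v $ 2"
    proof -
      have "k^2 * v $ 2 = k * (k * v $ 2)" by (simp add: power2_eq_square)
      also have "\<dots> = k * v $ 3" using e2 by simp
      also have "\<dots> = of_real H * v $ 2" using e3 by simp
      finally show ?thesis .
    qed
    ultimately have "k^2 = of_real H" using mult_cancel_right by blast
    then show ?thesis by blast
  qed
next
  have dr: "dim_row (JM F H) = 4" by (simp add: JM_def)
  assume "k^2 = of_real F \<or> k^2 = of_real H"
  then show "eigenvalue (JM F H) k"
  proof
    assume k: "k^2 = of_real F"
    define v :: "complex vec" where "v = vec 4 (\<lambda>i. if i = 0 then 1 else if i = 1 then k else 0)"
    have d: "dim_vec v = 4" by (simp add: v_def)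
    have vi: "v$0 = 1" "v$1 = k" "v$2 = 0" "v$3 = 0" by (simp_all add: v_def)
    have kk: "k * k = of_real F" using k by (simp add: power2_eq_square)
    have "JM F H *\<^sub>v v = k \<cdot>\<^sub>v v"
    proof (rule eq_vecI)
      fix i assume "i < dim_vec (k \<cdot>\<^sub>v v)"
      then have i4: "i < 4" using d by simp
      then have "(k \<cdot>\<^sub>v v) $ i = k * v $ i" using d by simp
      moreover have "(JM F H *\<^sub>v v) $ i = k * v $ i"
      proof -
        have "i = 0 \<or> i = 1 \<or> i = 2 \<or> i = 3" using i4 by (rule lt4)
        then show ?thesis
        proof (elim disjE)
          assume "i = 0" then show ?thesis using JM_mult(1)[OF d] vi by simp
        next
          assume "i = 1" then show ?thesis using JM_mult(2)[OF d] vi kk by simp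
        next
          assume "i = 2" then show ?thesis using JM_mult(3)[OF d] vi by simp
        next
          assume "i = 3" then show ?thesis using JM_mult(4)[OF d] vi by simp
        qed
      qed
      ultimately show "(JM F H *\<^sub>v v) $ i = (k \<cdot>\<^sub>v v) $ i" by simp
    qed (simp add: d dr)
    moreover have "v \<noteq> 0\<^sub>v 4"
    proof
      assume "v = 0\<^sub>v 4" then have "v $ 0 = 0" by simp
      then show False using vi by simp
    qed
    moreover have "v \<in> carrier_vec 4" using d by (rule carrier_vecI)
    ultimately show ?thesis unfolding eigenvalue_def eigenvector_def dr by (intro exI[of _ v] conjI)
  next
    assume k: "k^2 = of_real H"
    define v :: "complex vec" where "v = vec 4 (\<lambda>i. if i = 2 then 1 else if i = 3 then k else 0)"
    have d: "dim_vec v = 4" by (simp add: v_def)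
    have vi: "v$0 = 0" "v$1 = 0" "v$2 = 1" "v$3 = k" by (simp_all add: v_def)
    have kk: "k * k = of_real H" using k by (simp add: power2_eq_square)
    have "JM F H *\<^sub>v v = k \<cdot>\<^sub>v v"
    proof (rule eq_vecI)
      fix i assume "i < dim_vec (k \<cdot>\<^sub>v v)"
      then have i4: "i < 4" using d by simp
      then have "(k \<cdot>\<^sub>v v) $ i = k * v $ i" using d by simp
      moreover have "(JM F H *\<^sub>v v) $ i = k * v $ i"
      proof -
        have "i = 0 \<or> i = 1 \<or> i = 2 \<or> i = 3" using i4 by (rule lt4)
        then show ?thesis
        proof (elim disjE)
          assume "i = 0" then show ?thesis using JM_mult(1)[OF d] vi by simp
        next
          assume "i = 1" then show ?thesis using JM_mult(2)[OF d] vi by simp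
        next
          assume "i = 2" then show ?thesis using JM_mult(3)[OF d] vi by simp
        next
          assume "i = 3" then show ?thesis using JM_mult(4)[OF d] vi kk by simp
        qed
      qed
      ultimately show "(JM F H *\<^sub>v v) $ i = (k \<cdot>\<^sub>v v) $ i" by simp
    qed (simp add: d dr)
    moreover have "v \<noteq> 0\<^sub>v 4"
    proof
      assume "v = 0\<^sub>v 4" then have "v $ 2 = 0" by simp
      then show False using vi by simp
    qed
    moreover have "v \<in> carrier_vec 4" using d by (rule carrier_vecI)
    ultimately show ?thesis unfolding eigenvalue_def eigenvector_def dr by (intro exI[of _ v] conjI)
  qed
qed

lemma jac_JM: assumes "f_y 0 y = 0" "h_x a0 0 y = 0"
  shows "steiner_jac a0 0 y = JM (f_x 0 y) (h_y a0 0 y)"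
  unfolding steiner_jac_def JM_def assms by (rule refl)

lemma sq_neg: fixes x :: real shows "k^2 = complex_of_real (- (x^2)) \<longleftrightarrow> k = \<i> * of_real x \<or> k = - \<i> * of_real x"
proof -
  have "complex_of_real (- (x^2)) = (\<i> * of_real x)^2" by (simp add: power_mult_distrib)
  then show ?thesis by (simp add: power2_eq_iff)
qed

lemma sq_pos: fixes x :: real shows "k^2 = complex_of_real (x^2) \<longleftrightarrow> k = of_real x \<or> k = - of_real x"
proof -
  have "complex_of_real (x^2) = (of_real x)^2" by simp
  then show ?thesis by (simp add: power2_eq_iff)
qed

lemma SS_pos1: "SS t \<ge> 1"
  unfolding SS_def by simp

lemma equil: assumes "0 < ae" "ae < pi/2"
  defines "ye \<equiv> sqrt (tan ae) / 3"
  shows "ye > 0" "SS ye = 1 / cos ae"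
    "q ae = 6 * ye * (SS ye^2 - 1) / (SS ye^2 * (4 + SS ye))"
    "Pc (cos ae) = (16 + 6 * SS ye + 4 * SS ye^2 - SS ye^3) / SS ye^3"
proof -
  note c = trig_pos[OF assms(1,2)]
  define T where "T = tan ae"
  have T: "T > 0" using c by (simp add: T_def)
  show yp: "ye > 0" unfolding ye_def T_def[symmetric] using T by simp
  have y2: "ye^2 = T / 9" unfolding ye_def T_def[symmetric] using T by (simp add: power_divide)
  have y4: "81 * ye^4 = T^2"
  proof -
    have T9: "T = 9 * ye^2" using y2 by simp
    have "T^2 = (9 * ye^2)^2" using arg_cong[of _ _ "\<lambda>x. x^2", OF T9] .
    also have "\<dots> = 81 * ye^4" by (simp add: power_mult_distrib power_mult[symmetric])
    finally show ?thesis by simp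
  qed
  have "1 + T^2 = (inverse (cos ae))^2" unfolding T_def using c by (intro tan_sec) simp
  then have "SS ye = sqrt ((inverse (cos ae))^2)" unfolding SS_def using y4 by simp
  also have "\<dots> = 1 / cos ae" by (simp only: real_sqrt_abs) (use c in \<open>simp add: divide_inverse\<close>)
  finally show S: "SS ye = 1 / cos ae" .
  define S where "S = SS ye"
  have Sp: "S > 0" unfolding S_def by (rule SS_pos)
  have cS: "cos ae = 1 / S" unfolding S_def S by simp
  have s2: "(sin ae)^2 = 1 - (1/S)^2" using cS by (simp add: sin_squared_eq)
  have sq: "sqrt (tan ae) = 3 * ye" unfolding ye_def by simp
  have "q ae = 2 * (1 - (1/S)^2) * (3 * ye) / (4 + S)"
    unfolding q_def s2 sq using cS by simp
  also have "\<dots> = 6 * ye * (S^2 - 1) / (S^2 * (4 + S))"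
    using Sp by (simp add: field_simps power2_eq_square)
  finally show "q ae = 6 * ye * (SS ye^2 - 1) / (SS ye^2 * (4 + SS ye))" unfolding S_def .
  show "Pc (cos ae) = (16 + 6 * SS ye + 4 * SS ye^2 - SS ye^3) / SS ye^3"
    unfolding cS[unfolded S_def] Pc_def using Sp[unfolded S_def]
    by (simp add: field_simps power2_eq_square power3_eq_cube)
qed

lemma hy_equil: assumes "0 < ae" "ae < pi/2" "q ae = q a0"
  defines "ye \<equiv> sqrt (tan ae) / 3"
  shows "h_y a0 0 ye = - (18 * ye / (4 + SS ye)) * Pc (cos ae)" "18 * ye / (4 + SS ye) > 0"
proof -
  note E = equil[OF assms(1,2), folded ye_def]
  define S where "S = SS ye"
  have Sp: "S > 0" unfolding S_def by (rule SS_pos)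
  have "h_y a0 0 ye = - (18 * ye / (SS ye^3 * (4 + SS ye))) * (16 + 6 * SS ye + 4 * SS ye^2 - SS ye^3)"
    by (rule hy_formula) (use E assms(3) in auto)
  also have "\<dots> = - (18 * ye / (4 + SS ye)) * Pc (cos ae)"
    unfolding E(4) S_def[symmetric] using Sp by (simp add: field_simps)
  finally show "h_y a0 0 ye = - (18 * ye / (4 + SS ye)) * Pc (cos ae)" .
  show "18 * ye / (4 + SS ye) > 0" using E(1) SS_pos(1)[of ye] by simp
qed

lemma fx_neg: assumes "y > 0" shows "f_x 0 y < 0"
proof -
  define u where "u = (\<lambda>t::real. 1/(3*y) - 3*t)"
  define v where "v = (\<lambda>t::real. 1/(3*y) + 3*t)"
  have c: "9*y^2 > 0" using assms by simp
  have e: "(\<lambda>t. sf t y) = (\<lambda>t. u t / sqrt((u t)^2 + 9*y^2) - v t / sqrt((v t)^2 + 9*y^2))"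
    by (rule ext) (simp add: sf_def sa_def sb_def u_def v_def)
  have du: "(u has_real_derivative -3) (at 0)" unfolding u_def by (auto intro!: derivative_eq_intros)
  have dv: "(v has_real_derivative 3) (at 0)" unfolding v_def by (auto intro!: derivative_eq_intros)
  have D: "((\<lambda>t. sf t y) has_real_derivative
      (-3 * (9*y^2) / sqrt((u 0)^2 + 9*y^2)^3 - 3 * (9*y^2) / sqrt((v 0)^2 + 9*y^2)^3)) (at 0)"
    unfolding e by (intro DERIV_diff d_frac c du dv)
  have p1: "(u 0)^2 + 9*y^2 > 0" "(v 0)^2 + 9*y^2 > 0" using c by (auto intro: add_nonneg_pos)
  have w1: "sqrt((u 0)^2 + 9*y^2)^3 > 0" "sqrt((v 0)^2 + 9*y^2)^3 > 0" using p1 by simp_all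
  have "3 * (9*y^2) / sqrt((u 0)^2 + 9*y^2)^3 > 0" "3 * (9*y^2) / sqrt((v 0)^2 + 9*y^2)^3 > 0"
    using w1 c by simp_all
  then have neg: "(-3 * (9*y^2) / sqrt((u 0)^2 + 9*y^2)^3 - 3 * (9*y^2) / sqrt((v 0)^2 + 9*y^2)^3) < 0"
    by simp
  have "f_x 0 y = (-3 * (9*y^2) / sqrt((u 0)^2 + 9*y^2)^3 - 3 * (9*y^2) / sqrt((v 0)^2 + 9*y^2)^3)"
    unfolding f_x_def by (rule DERIV_imp_deriv[OF D])
  then show ?thesis using neg by simp
qed

lemma fy_zero: "f_y 0 y = 0"
proof -
  have "(\<lambda>t. sf 0 t) = (\<lambda>t. 0)" by (rule ext) (simp add: sf_def sa_def sb_def)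
  then show ?thesis unfolding f_y_def by simp
qed

lemma sa_deriv: assumes "y > 0"
  shows "((\<lambda>t. sa t y) has_real_derivative (2 * (1/(3*y) - 3*x) * (-3)) / (2 * sa x y)) (at x)"
    "((\<lambda>t. sb t y) has_real_derivative (2 * (1/(3*y) + 3*x) * 3) / (2 * sb x y)) (at x)"
proof -
  have c: "9*y^2 > 0" using assms by simp
  have p1: "(1/(3*y) - 3*x)^2 + 9*y^2 > 0" "(1/(3*y) + 3*x)^2 + 9*y^2 > 0" using c by (auto intro: add_nonneg_pos)
  have g1: "((\<lambda>t. (1/(3*y) - 3*t)^2 + 9*y^2) has_real_derivative 2 * (1/(3*y) - 3*x) * (-3)) (at x)"
    by (auto intro!: derivative_eq_intros)
  have g2: "((\<lambda>t. (1/(3*y) + 3*t)^2 + 9*y^2) has_real_derivative 2 * (1/(3*y) + 3*x) * 3) (at x)"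
    by (auto intro!: derivative_eq_intros)
  show "((\<lambda>t. sa t y) has_real_derivative (2 * (1/(3*y) - 3*x) * (-3)) / (2 * sa x y)) (at x)"
    unfolding sa_def by (rule d_sqrt[OF p1(1) g1])
  show "((\<lambda>t. sb t y) has_real_derivative (2 * (1/(3*y) + 3*x) * 3) / (2 * sb x y)) (at x)"
    unfolding sb_def by (rule d_sqrt[OF p1(2) g2])
qed

lemma sa_pos: assumes "y > 0" shows "sa x y > 0" "sb x y > 0"
proof -
  have c: "9*y^2 > 0" using assms by simp
  have p1: "(1/(3*y) - 3*x)^2 + 9*y^2 > 0" "(1/(3*y) + 3*x)^2 + 9*y^2 > 0" using c by (auto intro: add_nonneg_pos)
  then show "sa x y > 0" "sb x y > 0" unfolding sa_def sb_def by simp_all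
qed

lemma hx_zero: assumes "y > 0" shows "h_x a0 0 y = 0"
proof -
  define g where "g = (\<lambda>t. sh a0 t y)"
  have dsa: "(\<lambda>t. sa t y) differentiable (at x)" for x
    using sa_deriv(1)[OF assms, of x] real_differentiable_def by blast
  have dsb: "(\<lambda>t. sb t y) differentiable (at x)" for x
    using sa_deriv(2)[OF assms, of x] real_differentiable_def by blast
  have nz: "sa 0 y \<noteq> 0" "sb 0 y \<noteq> 0" "3 * y \<noteq> 0" using sa_pos[OF assms, of 0] assms by auto
  have "g differentiable (at 0)" unfolding g_def sh_def
    by (intro differentiable_add differentiable_mult differentiable_divide differentiable_const dsa dsb nz)
  then obtain D where dD: "(g has_real_derivative D) (at 0)" using real_differentiable_def by blast
  have ev: "(\<lambda>t. g (- t)) = g"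
    by (rule ext) (simp add: g_def sh_def sa_def sb_def algebra_simps)
  have m: "((\<lambda>t::real. - t) has_real_derivative -1) (at 0)" by (auto intro!: derivative_eq_intros)
  have dD': "(g has_real_derivative D) (at (- 0))" using dD by simp
  have "((\<lambda>t. g (- t)) has_real_derivative D * -1) (at 0)" by (rule DERIV_chain2[OF dD' m])
  then have "(g has_real_derivative D * -1) (at 0)" unfolding ev .
  then have "D * -1 = D" using dD by (rule DERIV_unique)
  then have D0: "D = 0" by simp
  show ?thesis unfolding h_x_def g_def[symmetric] using DERIV_imp_deriv[OF dD] D0 by simp
qed


lemma equil_jac: assumes "0 < ae" "ae < pi/2" "q ae = q a0"
  defines "ye \<equiv> sqrt (tan ae) / 3"
  shows "ye > 0" "f_x 0 ye < 0" "steiner_jac a0 0 ye = JM (f_x 0 ye) (h_y a0 0 ye)"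
    "ae < astar \<Longrightarrow> h_y a0 0 ye < 0" "ae = astar \<Longrightarrow> h_y a0 0 ye = 0"
    "ae > astar \<Longrightarrow> h_y a0 0 ye > 0"
proof -
  note E = equil[OF assms(1,2), folded ye_def]
  note H = hy_equil[OF assms(1,2,3), folded ye_def]
  show yp: "ye > 0" by (rule E(1))
  show "f_x 0 ye < 0" by (rule fx_neg[OF yp])
  show "steiner_jac a0 0 ye = JM (f_x 0 ye) (h_y a0 0 ye)"
    by (rule jac_JM[OF fy_zero hx_zero[OF yp]])
  define K where "K = 18 * ye / (4 + SS ye)"
  have K: "K > 0" unfolding K_def by (rule H(2))
  have h: "h_y a0 0 ye = - (K * Pc (cos ae))" unfolding K_def H(1) by simp
  show "ae < astar \<Longrightarrow> h_y a0 0 ye < 0"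
  proof -
    assume "ae < astar"
    then have "Pc (cos ae) > 0" by (rule Pc_cos_sign(1)[OF assms(1,2)])
    then have "K * Pc (cos ae) > 0" by (rule mult_pos_pos[OF K])
    then show ?thesis unfolding h by simp
  qed
  show "ae = astar \<Longrightarrow> h_y a0 0 ye = 0"
  proof -
    assume "ae = astar"
    then have "Pc (cos ae) = 0" by (rule Pc_cos_sign(3)[OF assms(1,2)])
    then show ?thesis unfolding h by simp
  qed
  show "ae > astar \<Longrightarrow> h_y a0 0 ye > 0"
  proof -
    assume "ae > astar"
    then have "Pc (cos ae) < 0" by (rule Pc_cos_sign(2)[OF assms(1,2)])
    then have "K * Pc (cos ae) < 0" using K by (simp add: mult_pos_neg)
    then show ?thesis unfolding h by simp
  qed
qed

lemma imag_case: fixes F H :: real assumes "F < 0" "H < 0"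
  shows "\<exists>s1 s2. s1 > 0 \<and> s2 > 0 \<and> {k. eigenvalue (JM F H) k}
           = {\<i> * of_real s1, - \<i> * of_real s1, \<i> * of_real s2, - \<i> * of_real s2}"
proof -
  define s1 where "s1 = sqrt (- F)"
  define s2 where "s2 = sqrt (- H)"
  have sp: "s1 > 0" "s2 > 0" using assms by (simp_all add: s1_def s2_def)
  have F: "F = - (s1^2)" using assms by (simp add: s1_def)
  have H: "H = - (s2^2)" using assms by (simp add: s2_def)
  have "{k. eigenvalue (JM F H) k} = {\<i> * of_real s1, - \<i> * of_real s1, \<i> * of_real s2, - \<i> * of_real s2}"
  proof (rule Set.set_eqI)
    fix k
    have "k \<in> {k. eigenvalue (JM F H) k} \<longleftrightarrow> k^2 = of_real F \<or> k^2 = of_real H" by (simp add: JM_eig)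
    also have "\<dots> \<longleftrightarrow> (k = \<i> * of_real s1 \<or> k = - \<i> * of_real s1) \<or> (k = \<i> * of_real s2 \<or> k = - \<i> * of_real s2)"
      unfolding F H sq_neg ..
    also have "\<dots> \<longleftrightarrow> k \<in> {\<i> * of_real s1, - \<i> * of_real s1, \<i> * of_real s2, - \<i> * of_real s2}" by blast
    finally show "k \<in> {k. eigenvalue (JM F H) k} \<longleftrightarrow> k \<in> {\<i> * of_real s1, - \<i> * of_real s1, \<i> * of_real s2, - \<i> * of_real s2}" .
  qed
  then show ?thesis using sp by blast
qed

lemma real_case: fixes F H :: real assumes "F < 0" "H > 0"
  shows "\<exists>s r. s > 0 \<and> r > 0 \<and> {k. eigenvalue (JM F H) k}
           = {\<i> * of_real s, - \<i> * of_real s, of_real r, - of_real r}"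
proof -
  define s1 where "s1 = sqrt (- F)"
  define s2 where "s2 = sqrt H"
  have sp: "s1 > 0" "s2 > 0" using assms by (simp_all add: s1_def s2_def)
  have F: "F = - (s1^2)" using assms by (simp add: s1_def)
  have H: "H = s2^2" using assms by (simp add: s2_def)
  have "{k. eigenvalue (JM F H) k} = {\<i> * of_real s1, - \<i> * of_real s1, of_real s2, - of_real s2}"
  proof (rule Set.set_eqI)
    fix k
    have "k \<in> {k. eigenvalue (JM F H) k} \<longleftrightarrow> k^2 = of_real F \<or> k^2 = of_real H" by (simp add: JM_eig)
    also have "\<dots> \<longleftrightarrow> (k = \<i> * of_real s1 \<or> k = - \<i> * of_real s1) \<or> (k = of_real s2 \<or> k = - of_real s2)"
      unfolding F H sq_neg sq_pos ..
    also have "\<dots> \<longleftrightarrow> k \<in> {\<i> * of_real s1, - \<i> * of_real s1, of_real s2, - of_real s2}" by blast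
    finally show "k \<in> {k. eigenvalue (JM F H) k} \<longleftrightarrow> k \<in> {\<i> * of_real s1, - \<i> * of_real s1, of_real s2, - of_real s2}" .
  qed
  then show ?thesis using sp by blast
qed

lemma eq_imag: assumes "0 < ae" "ae < pi/2" "q ae = q a0" "ae < astar"
  shows "\<exists>s1 s2. s1 > 0 \<and> s2 > 0 \<and> {k. eigenvalue (steiner_jac a0 0 (sqrt (tan ae) / 3)) k}
           = {\<i> * of_real s1, - \<i> * of_real s1, \<i> * of_real s2, - \<i> * of_real s2}"
  unfolding equil_jac(3)[OF assms(1-3)]
  by (rule imag_case[OF equil_jac(2)[OF assms(1-3)] equil_jac(4)[OF assms(1-3) assms(4)]])

lemma eq_real: assumes "0 < ae" "ae < pi/2" "q ae = q a0" "ae > astar"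
  shows "\<exists>s r. s > 0 \<and> r > 0 \<and> {k. eigenvalue (steiner_jac a0 0 (sqrt (tan ae) / 3)) k}
           = {\<i> * of_real s, - \<i> * of_real s, of_real r, - of_real r}"
  unfolding equil_jac(3)[OF assms(1-3)]
  by (rule real_case[OF equil_jac(2)[OF assms(1-3)] equil_jac(6)[OF assms(1-3) assms(4)]])

theorem mainTheorem4:
  fixes \<alpha>0 :: real
  assumes "0 < \<alpha>0" and "\<alpha>0 < pi/2"
  shows
   "(\<forall>\<alpha>e ye. 0 < \<alpha>e \<and> \<alpha>e < pi/2 \<and> q \<alpha>e = q \<alpha>0 \<and> ye = sqrt (tan \<alpha>e) / 3 \<longrightarrow>
        f_x 0 ye < 0
      \<and> eigenvalue (steiner_jac \<alpha>0 0 ye) (\<i> * complex_of_real (sqrt (- f_x 0 ye)))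
      \<and> eigenvalue (steiner_jac \<alpha>0 0 ye) (- \<i> * complex_of_real (sqrt (- f_x 0 ye)))
      \<and> sqrt (- f_x 0 ye) \<noteq> 0
      \<and> (\<alpha>e < alpha_star \<longrightarrow> h_y \<alpha>0 0 ye < 0)
      \<and> (\<alpha>e = alpha_star \<longrightarrow> h_y \<alpha>0 0 ye = 0)
      \<and> (\<alpha>e > alpha_star \<longrightarrow> h_y \<alpha>0 0 ye > 0))
  \<and> (\<alpha>0 < alpha_star \<longrightarrow>
      (\<exists>s1 s2. s1 > 0 \<and> s2 > 0 \<and>
         {k. eigenvalue (steiner_jac \<alpha>0 0 (sqrt (tan \<alpha>0) / 3)) k}
           = {\<i> * of_real s1, - \<i> * of_real s1, \<i> * of_real s2, - \<i> * of_real s2}))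
  \<and> (\<alpha>0 > alpha_star \<longrightarrow>
      (\<exists>s r. s > 0 \<and> r > 0 \<and>
         {k. eigenvalue (steiner_jac \<alpha>0 0 (sqrt (tan \<alpha>0) / 3)) k}
           = {\<i> * of_real s, - \<i> * of_real s, of_real r, - of_real r}))
  \<and> (\<alpha>0 \<noteq> alpha_star \<longrightarrow>
      (\<forall>\<alpha>1 \<alpha>2. 0 < \<alpha>1 \<and> \<alpha>1 < \<alpha>2 \<and> \<alpha>2 < pi/2 \<and> q \<alpha>1 = q \<alpha>0 \<and> q \<alpha>2 = q \<alpha>0 \<longrightarrow>
         (\<exists>s1 s2. s1 > 0 \<and> s2 > 0 \<and>
            {k. eigenvalue (steiner_jac \<alpha>0 0 (sqrt (tan \<alpha>1) / 3)) k}
              = {\<i> * of_real s1, - \<i> * of_real s1, \<i> * of_real s2, - \<i> * of_real s2})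
       \<and> (\<exists>s r. s > 0 \<and> r > 0 \<and>
            {k. eigenvalue (steiner_jac \<alpha>0 0 (sqrt (tan \<alpha>2) / 3)) k}
              = {\<i> * of_real s, - \<i> * of_real s, of_real r, - of_real r})))"
proof (intro conjI)
  show "\<forall>\<alpha>e ye. 0 < \<alpha>e \<and> \<alpha>e < pi/2 \<and> q \<alpha>e = q \<alpha>0 \<and> ye = sqrt (tan \<alpha>e) / 3 \<longrightarrow>
        f_x 0 ye < 0
      \<and> eigenvalue (steiner_jac \<alpha>0 0 ye) (\<i> * complex_of_real (sqrt (- f_x 0 ye)))
      \<and> eigenvalue (steiner_jac \<alpha>0 0 ye) (- \<i> * complex_of_real (sqrt (- f_x 0 ye)))
      \<and> sqrt (- f_x 0 ye) \<noteq> 0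
      \<and> (\<alpha>e < alpha_star \<longrightarrow> h_y \<alpha>0 0 ye < 0)
      \<and> (\<alpha>e = alpha_star \<longrightarrow> h_y \<alpha>0 0 ye = 0)
      \<and> (\<alpha>e > alpha_star \<longrightarrow> h_y \<alpha>0 0 ye > 0)"
  proof (intro allI impI)
    fix ae ye assume A: "0 < ae \<and> ae < pi/2 \<and> q ae = q \<alpha>0 \<and> ye = sqrt (tan ae) / 3"
    then have a1: "0 < ae" "ae < pi/2" "q ae = q \<alpha>0" and yd: "ye = sqrt (tan ae) / 3" by auto
    note J = equil_jac[OF a1, folded yd]
    define s where "s = sqrt (- f_x 0 ye)"
    have F: "f_x 0 ye = - (s^2)" using J(2) by (simp add: s_def)
    have sp: "s > 0" using J(2) by (simp add: s_def)
    have ev: "eigenvalue (steiner_jac \<alpha>0 0 ye) k" if "k = \<i> * of_real s \<or> k = - \<i> * of_real s" for k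
      unfolding J(3) JM_eig F using that sq_neg[of k s] by blast
    show "f_x 0 ye < 0
      \<and> eigenvalue (steiner_jac \<alpha>0 0 ye) (\<i> * complex_of_real (sqrt (- f_x 0 ye)))
      \<and> eigenvalue (steiner_jac \<alpha>0 0 ye) (- \<i> * complex_of_real (sqrt (- f_x 0 ye)))
      \<and> sqrt (- f_x 0 ye) \<noteq> 0
      \<and> (ae < alpha_star \<longrightarrow> h_y \<alpha>0 0 ye < 0)
      \<and> (ae = alpha_star \<longrightarrow> h_y \<alpha>0 0 ye = 0)
      \<and> (ae > alpha_star \<longrightarrow> h_y \<alpha>0 0 ye > 0)"
      unfolding s_def[symmetric] alpha_star_eq
      using J(2,4,5,6) ev sp by auto
  qed
  show "\<alpha>0 < alpha_star \<longrightarrow>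
      (\<exists>s1 s2. s1 > 0 \<and> s2 > 0 \<and>
         {k. eigenvalue (steiner_jac \<alpha>0 0 (sqrt (tan \<alpha>0) / 3)) k}
           = {\<i> * of_real s1, - \<i> * of_real s1, \<i> * of_real s2, - \<i> * of_real s2})"
    unfolding alpha_star_eq using eq_imag[OF assms refl] by blast
  show "\<alpha>0 > alpha_star \<longrightarrow>
      (\<exists>s r. s > 0 \<and> r > 0 \<and>
         {k. eigenvalue (steiner_jac \<alpha>0 0 (sqrt (tan \<alpha>0) / 3)) k}
           = {\<i> * of_real s, - \<i> * of_real s, of_real r, - of_real r})"
    unfolding alpha_star_eq using eq_real[OF assms refl] by blast
  show "\<alpha>0 \<noteq> alpha_star \<longrightarrow>
      (\<forall>\<alpha>1 \<alpha>2. 0 < \<alpha>1 \<and> \<alpha>1 < \<alpha>2 \<and> \<alpha>2 < pi/2 \<and> q \<alpha>1 = q \<alpha>0 \<and> q \<alpha>2 = q \<alpha>0 \<longrightarrow>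
         (\<exists>s1 s2. s1 > 0 \<and> s2 > 0 \<and>
            {k. eigenvalue (steiner_jac \<alpha>0 0 (sqrt (tan \<alpha>1) / 3)) k}
              = {\<i> * of_real s1, - \<i> * of_real s1, \<i> * of_real s2, - \<i> * of_real s2})
       \<and> (\<exists>s r. s > 0 \<and> r > 0 \<and>
            {k. eigenvalue (steiner_jac \<alpha>0 0 (sqrt (tan \<alpha>2) / 3)) k}
              = {\<i> * of_real s, - \<i> * of_real s, of_real r, - of_real r}))"
  proof (intro impI allI)
    fix a1 a2 assume A: "0 < a1 \<and> a1 < a2 \<and> a2 < pi/2 \<and> q a1 = q \<alpha>0 \<and> q a2 = q \<alpha>0"
    then have h: "0 < a1" "a1 < a2" "a2 < pi/2" "q a1 = q \<alpha>0" "q a2 = q \<alpha>0" by auto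
    have qq: "q a1 = q a2" using h by simp
    note sep = q_sep[OF h(1,2,3) qq]
    have b1: "a1 < pi/2" "0 < a2" using h by auto
    show "(\<exists>s1 s2. s1 > 0 \<and> s2 > 0 \<and>
            {k. eigenvalue (steiner_jac \<alpha>0 0 (sqrt (tan a1) / 3)) k}
              = {\<i> * of_real s1, - \<i> * of_real s1, \<i> * of_real s2, - \<i> * of_real s2})
       \<and> (\<exists>s r. s > 0 \<and> r > 0 \<and>
            {k. eigenvalue (steiner_jac \<alpha>0 0 (sqrt (tan a2) / 3)) k}
              = {\<i> * of_real s, - \<i> * of_real s, of_real r, - of_real r})"
      using eq_imag[OF h(1) b1(1) h(4) sep(1)] eq_real[OF b1(2) h(3) h(5) sep(2)] by blast
  qed
qed

end
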